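(* Let $k\ge1$ and let $p=(p_1,\dots,p_n)$ be a parking function. Then the permutation $\pi(p)$ avoids the pattern $12\cdots(k+1)$ if and only if the word $p_1\cdots p_n$ contains no weakly increasing subsequence of length $k+1$, i.e. there are no indices $i_1<\dots<i_{k+1}$ with $p_{i_1}\le p_{i_2}\le\dots\le p_{i_{k+1}}$.
   Context: $[n]=\{1,\dots,n\}$. A tuple $p\in[n]^n$ is a parking function if its weakly increasing rearrangement $(p'_1,\dots,p'_n)$ satisfies $p'_i\le i$ for all $i$. $\pi(p)$ is the permutation obtained by listing, for $s=1,\dots,n$ in turn, the indices $j$ with $p_j=s$ in increasing order, and concatenating. A permutation avoids $\sigma\in\mathfrak S_m$ if none of its length-$m$ subsequences is order-isomorphic to $\sigma$. *)

theory Defs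
  imports Main
begin

text \<open>Words/tuples are lists; entries are 1-based values, positions of the tuple
  p = (p_1,...,p_n) are the list positions 0..n-1 (position j-1 holds p_j).\<close>

definition parking_function :: "nat list \<Rightarrow> bool" where
  "parking_function p \<longleftrightarrow> set p \<subseteq> {1..length p} \<and>
     (\<forall>i < length p. sort p ! i \<le> i + 1)"

definition pf_perm :: "nat list \<Rightarrow> nat list" where
  "pf_perm p = concat (map (\<lambda>s. filter (\<lambda>j. p ! (j - 1) = s) [1..<length p + 1])
                             [1..<length p + 1])"

definition contains_pattern :: "nat list \<Rightarrow> nat list \<Rightarrow> bool" where
  "contains_pattern w \<sigma> \<longleftrightarrow> (\<exists>idx :: nat \<Rightarrow> nat.
      (\<forall>a b. a < b \<and> b < length \<sigma> \<longrightarrow> idx a < idx b) \<and>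
      (\<forall>a < length \<sigma>. idx a < length w) \<and>
      (\<forall>a < length \<sigma>. \<forall>b < length \<sigma>. (w ! idx a < w ! idx b \<longleftrightarrow> \<sigma> ! a < \<sigma> ! b)))"

definition avoids :: "nat list \<Rightarrow> nat list \<Rightarrow> bool" where
  "avoids w \<sigma> \<longleftrightarrow> \<not> contains_pattern w \<sigma>"

definition has_weakly_incr_subseq :: "nat list \<Rightarrow> nat \<Rightarrow> bool" where
  "has_weakly_incr_subseq w m \<longleftrightarrow> (\<exists>idx :: nat \<Rightarrow> nat.
      (\<forall>a b. a < b \<and> b < m \<longrightarrow> idx a < idx b) \<and>
      (\<forall>a < m. idx a < length w) \<and>
      (\<forall>a b. a < b \<and> b < m \<longrightarrow> w ! idx a \<le> w ! idx b))"

end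

theory Submission
  imports Defs
begin

definition RR :: "nat list \<Rightarrow> nat \<Rightarrow> nat \<Rightarrow> bool" where
  "RR p j j' \<longleftrightarrow> p ! (j - 1) < p ! (j' - 1) \<or> (p ! (j - 1) = p ! (j' - 1) \<and> j < j')"

lemma sorted_gen:
  "sorted_wrt (<) ss \<Longrightarrow>
   sorted_wrt (RR p) (concat (map (\<lambda>s. filter (\<lambda>j. p ! (j - 1) = s) [1..<m]) ss))"
proof (induction ss)
  case Nil
  then show ?case by simp
next
  case (Cons s ss)
  have "sorted_wrt (RR p) (filter (\<lambda>j. p ! (j - 1) = s) [1..<m])"
  proof (rule sorted_wrt_mono_rel[of _ "(<)"])
    show "sorted_wrt (<) (filter (\<lambda>j. p ! (j - 1) = s) [1..<m])"
      by (rule sorted_wrt_filter) (simp del: upt_Suc)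
  qed (auto simp: RR_def)
  moreover have "\<forall>x\<in>set (filter (\<lambda>j. p ! (j - 1) = s) [1..<m]).
      \<forall>y\<in>set (concat (map (\<lambda>s. filter (\<lambda>j. p ! (j - 1) = s) [1..<m]) ss)). RR p x y"
    using Cons.prems by (auto simp: RR_def)
  ultimately show ?case using Cons by (simp add: sorted_wrt_append)
qed

lemma pf_sorted: "sorted_wrt (RR p) (pf_perm p)"
  unfolding pf_perm_def by (rule sorted_gen) (simp del: upt_Suc)

lemma pf_set: "set (pf_perm p) = {j. 1 \<le> j \<and> j \<le> length p \<and> p ! (j - 1) \<in> {1..length p}}"
  unfolding pf_perm_def by (auto simp del: upt_Suc)

theorem corollary2p11:
  fixes k :: nat and p :: "nat list"
  assumes "k \<ge> 1" and "parking_function p"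
  shows "avoids (pf_perm p) [1..<k + 2] \<longleftrightarrow> \<not> has_weakly_incr_subseq p (k + 1)"
proof -
  define q where "q = pf_perm p"
  have S: "\<And>i i'. i < i' \<Longrightarrow> i' < length q \<Longrightarrow> RR p (q ! i) (q ! i')"
    using pf_sorted[of p] unfolding q_def sorted_wrt_iff_nth_less by blast
  have Q: "set q = {j. 1 \<le> j \<and> j \<le> length p \<and> p ! (j - 1) \<in> {1..length p}}"
    unfolding q_def by (rule pf_set)
  have range: "set p \<subseteq> {1..length p}" using assms(2) unfolding parking_function_def by blast
  have "contains_pattern q [1..<k + 2] \<longleftrightarrow> has_weakly_incr_subseq p (k + 1)"
  proof
    assume "contains_pattern q [1..<k + 2]"
    then obtain idx where i1: "\<forall>a b. a < b \<and> b < k + 1 \<longrightarrow> idx a < idx b"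
      and i2: "\<forall>a < k + 1. idx a < length q"
      and i3: "\<forall>a < k + 1. \<forall>b < k + 1. (q ! idx a < q ! idx b \<longleftrightarrow> [1..<k + 2] ! a < [1..<k + 2] ! b)"
      unfolding contains_pattern_def by (auto simp del: upt_Suc)
    have i3': "\<And>a b. a < b \<Longrightarrow> b < k + 1 \<Longrightarrow> q ! idx a < q ! idx b"
      using i3 by (simp add: nth_upt del: upt_Suc)
    have mem: "\<And>a. a < k + 1 \<Longrightarrow> q ! idx a \<in> set q" using i2 by simp
    have mem2: "\<And>a. a < k + 1 \<Longrightarrow> 1 \<le> q ! idx a \<and> q ! idx a \<le> length p"
      using mem Q by blast
    show "has_weakly_incr_subseq p (k + 1)"
      unfolding has_weakly_incr_subseq_def
    proof (intro exI[of _ "\<lambda>a. q ! idx a - 1"] conjI allI impI)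
      fix a b assume ab: "a < b \<and> b < k + 1"
      then show "q ! idx a - 1 < q ! idx b - 1" using i3'[of a b] mem2[of a] by linarith
      have "RR p (q ! idx a) (q ! idx b)" using S[of "idx a" "idx b"] i1 i2 ab by auto
      then show "p ! (q ! idx a - 1) \<le> p ! (q ! idx b - 1)" unfolding RR_def by auto
    next
      fix a assume "a < k + 1"
      then show "q ! idx a - 1 < length p" using mem2[of a] by linarith
    qed
  next
    assume "has_weakly_incr_subseq p (k + 1)"
    then obtain idx where i1: "\<forall>a b. a < b \<and> b < k + 1 \<longrightarrow> idx a < idx b"
      and i2: "\<forall>a < k + 1. idx a < length p"
      and i3: "\<forall>a b. a < b \<and> b < k + 1 \<longrightarrow> p ! idx a \<le> p ! idx b"
      unfolding has_weakly_incr_subseq_def by auto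
    have mem: "\<And>a. a < k + 1 \<Longrightarrow> Suc (idx a) \<in> set q"
    proof -
      fix a assume "a < k + 1"
      then have "idx a < length p" using i2 by auto
      then have "p ! idx a \<in> {1..length p}" using range nth_mem by blast
      then show "Suc (idx a) \<in> set q" unfolding Q using \<open>idx a < length p\<close> by auto
    qed
    let ?J = "\<lambda>a. (SOME i. i < length q \<and> q ! i = Suc (idx a))"
    have J: "\<And>a. a < k + 1 \<Longrightarrow> ?J a < length q \<and> q ! ?J a = Suc (idx a)"
    proof -
      fix a assume "a < k + 1"
      then have "\<exists>i. i < length q \<and> q ! i = Suc (idx a)" using mem in_set_conv_nth by metis
      then show "?J a < length q \<and> q ! ?J a = Suc (idx a)" by (rule someI_ex)
    qed
    have R: "\<And>a b. a < b \<Longrightarrow> b < k + 1 \<Longrightarrow> RR p (Suc (idx a)) (Suc (idx b))"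
      using i1 i3 unfolding RR_def by fastforce
    have mono: "\<And>a b. a < b \<Longrightarrow> b < k + 1 \<Longrightarrow> ?J a < ?J b"
    proof (rule ccontr)
      fix a b assume ab: "a < b" "b < k + 1" and "\<not> ?J a < ?J b"
      then have "?J b < ?J a \<or> ?J b = ?J a" by linarith
      then show False
      proof
        assume "?J b < ?J a"
        then have "RR p (Suc (idx b)) (Suc (idx a))" using S[of "?J b" "?J a"] J[of a] J[of b] ab by auto
        then show False using R[OF ab] unfolding RR_def by auto
      next
        assume "?J b = ?J a"
        then show False using J[of a] J[of b] ab i1 by (metis Suc_inject less_trans less_irrefl)
      qed
    qed
    show "contains_pattern q [1..<k + 2]"
      unfolding contains_pattern_def length_upt
    proof (intro exI[of _ ?J] conjI allI impI)
      fix a b assume "a < b \<and> b < k + 2 - 1"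
      then show "?J a < ?J b" using mono by auto
    next
      fix a assume "a < k + 2 - 1"
      then show "?J a < length q" using J by auto
    next
      fix a b assume a: "a < k + 2 - 1" and b: "b < k + 2 - 1"
      have "idx a < idx b \<longleftrightarrow> a < b"
        using i1 a b by (metis linorder_neqE_nat less_asym add_2_eq_Suc' diff_Suc_1 Suc_eq_plus1)
      then show "(q ! ?J a < q ! ?J b) = ([1..<k + 2] ! a < [1..<k + 2] ! b)"
        using J[of a] J[of b] a b by (simp add: nth_upt del: upt_Suc)
    qed
  qed
  then show ?thesis unfolding avoids_def q_def by simp
qed

end
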